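(* Consider an agent-dependent SDP performance estimation problem (PEP) for distributed optimization with $n$ agents, and let $(F,G)$, $F=[f_1^T\dots f_n^T]\in\mathbb{R}^{nq}$, $G=[G_{ij}]_{i,j=1}^n\in\mathbb{R}^{np\times np}$, be any feasible solution. Let $\{\mathcal{V}_1,\dots,\mathcal{V}_U\}$ be the partition of the agent set $\mathcal{V}=\{1,\dots,n\}$ into equivalence classes of agents, with $n_u=|\mathcal{V}_u|$ and $u_i$ the index of the class containing agent $i$. Define $F^s=[(f_1^s)^T\dots(f_n^s)^T]$ and $G^s=[G^s_{ij}]$ by $$f_i^s=\frac{1}{n_{u_i}}\sum_{k\in\mathcal{V}_{u_i}}f_k,\qquad G^s_{ij}=\begin{cases}\frac{1}{n_{u_i}}\sum_{k\in\mathcal{V}_{u_i}}G_{kk}, & i=j,\\[1mm] \frac{1}{n_{u_i}(n_{u_i}-1)}\sum_{k\in\mathcal{V}_{u_i}}\sum_{l\in\mathcal{V}_{u_i},\,l\ne k}G_{kl}, & j\ne i,\ j\in\mathcal{V}_{u_i},\\[1mm] \frac{1}{n_{u_i}n_{u_j}}\sum_{k\in\mathcal{V}_{u_i}}\sum_{l\in\mathcal{V}_{u_j}}G_{kl}, & j\notin\mathcal{V}_{u_i}.\end{cases}$$ Then $(F^s,G^s)$ is a feasible solution of the PEP and $\mathcal{P}(F^s,G^s)=\mathcal{P}(F,G)$.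
   Context: Distributed optimization: $n$ agents with local functions $f_i:\mathbb{R}^d\to\mathbb{R}$ aim to minimize $f(x)=\frac1n\sum_i f_i(x)$ via an algorithm built from local gradient evaluations, consensus steps $y_i=\sum_j w_{ij}x_j$ with averaging matrices from a given class, and linear combinations of each agent's local variables. In the agent-dependent SDP PEP, each agent $i$ holds $p$ vector variables (its iterates, consensus outputs, gradients, and copies of points common to all agents such as the minimizer $x^*$), gathered as the columns of $P_i\in\mathbb{R}^{d\times p}$ in the same order for all agents, and $q$ function values gathered in $f_i\in\mathbb{R}^q$. The variables are $F=[f_1^T\dots f_n^T]$ and the Gram matrix $G=P^TP\succeq0$ with $P=[P_1\dots P_n]$, so $G_{ij}=P_i^TP_j$; the objective $\mathcal{P}(F,G)$ (performance criterion) and all constraints (algorithm constraints, function-class interpolation constraints, initial conditions, optimality condition $\frac1n\sum_i\nabla f_i(x^* )=0$, consensus constraints) are linear constraints or linear matrix inequalities in $(F,G)$, together with $G\succeq0$. Two agents $i,j$ are equivalent if, for every feasible $(F,G)$, the solution obtained by permuting the blocks of agents $i$ and $j$ (in $F$ and in the block rows and columns of $G$) is again feasible and has the same objective value; this is an equivalence relation whose classes partition $\mathcal{V}$. *)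

theory Defs
  imports Complex_Main
begin

text \<open>
Encoding of an agent-dependent SDP PEP with n agents, each holding p vector
variables and q function values.
  F :: nat => real   represents the vector [f_1^T ... f_n^T] in R^{nq};
                     entry a (a<q) of f_i is  F (i*q + a).
  G :: nat => nat => real  represents the np x np Gram matrix;
                     entry (a,b) of block G_ij is  G (i*p + a) (j*p + b).
Agents are numbered 0..n-1.
\<close>

type_synonym lfun = "(nat \<Rightarrow> real) \<times> (nat \<Rightarrow> nat \<Rightarrow> real)"

definition lval :: "nat \<Rightarrow> nat \<Rightarrow> nat \<Rightarrow> lfun \<Rightarrow> (nat \<Rightarrow> real) \<Rightarrow> (nat \<Rightarrow> nat \<Rightarrow> real) \<Rightarrow> real" where
  "lval n p q c F G =
     (\<Sum>k<n*q. fst c k * F k) + (\<Sum>k<n*p. \<Sum>l<n*p. snd c k l * G k l)"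

definition psd :: "nat \<Rightarrow> (nat \<Rightarrow> nat \<Rightarrow> real) \<Rightarrow> bool" where
  "psd N M \<longleftrightarrow> (\<forall>r<N. \<forall>s<N. M r s = M s r) \<and>
                 (\<forall>x :: nat \<Rightarrow> real. 0 \<le> (\<Sum>r<N. \<Sum>s<N. x r * M r s * x s))"

datatype constr =
    LinLe lfun real
  | LinEq lfun real
  | LMI nat "nat \<Rightarrow> nat \<Rightarrow> lfun" "nat \<Rightarrow> nat \<Rightarrow> real"

fun sat :: "nat \<Rightarrow> nat \<Rightarrow> nat \<Rightarrow> constr \<Rightarrow> (nat \<Rightarrow> real) \<Rightarrow> (nat \<Rightarrow> nat \<Rightarrow> real) \<Rightarrow> bool" where
  "sat n p q (LinLe c b) F G = (lval n p q c F G \<le> b)"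
| "sat n p q (LinEq c b) F G = (lval n p q c F G = b)"
| "sat n p q (LMI m A C) F G = psd m (\<lambda>r s. lval n p q (A r s) F G + C r s)"

definition feasible :: "nat \<Rightarrow> nat \<Rightarrow> nat \<Rightarrow> constr list \<Rightarrow> (nat \<Rightarrow> real) \<Rightarrow> (nat \<Rightarrow> nat \<Rightarrow> real) \<Rightarrow> bool" where
  "feasible n p q cs F G \<longleftrightarrow> psd (n*p) G \<and> (\<forall>c\<in>set cs. sat n p q c F G)"

definition swp :: "nat \<Rightarrow> nat \<Rightarrow> nat \<Rightarrow> nat" where
  "swp i j x = (if x = i then j else if x = j then i else x)"

definition swapF :: "nat \<Rightarrow> nat \<Rightarrow> nat \<Rightarrow> (nat \<Rightarrow> real) \<Rightarrow> (nat \<Rightarrow> real)" where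
  "swapF q i j F = (\<lambda>k. F (swp i j (k div q) * q + k mod q))"

definition swapG :: "nat \<Rightarrow> nat \<Rightarrow> nat \<Rightarrow> (nat \<Rightarrow> nat \<Rightarrow> real) \<Rightarrow> (nat \<Rightarrow> nat \<Rightarrow> real)" where
  "swapG p i j G = (\<lambda>k l. G (swp i j (k div p) * p + k mod p) (swp i j (l div p) * p + l mod p))"

definition equiv_agents :: "nat \<Rightarrow> nat \<Rightarrow> nat \<Rightarrow> constr list \<Rightarrow> lfun \<Rightarrow> nat \<Rightarrow> nat \<Rightarrow> bool" where
  "equiv_agents n p q cs obj i j \<longleftrightarrow> i < n \<and> j < n \<and>
     (\<forall>F G. feasible n p q cs F G \<longrightarrow>
        feasible n p q cs (swapF q i j F) (swapG p i j G) \<and>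
        lval n p q obj (swapF q i j F) (swapG p i j G) = lval n p q obj F G)"

definition agent_class :: "nat \<Rightarrow> nat \<Rightarrow> nat \<Rightarrow> constr list \<Rightarrow> lfun \<Rightarrow> nat \<Rightarrow> nat set" where
  "agent_class n p q cs obj i = {k. k < n \<and> equiv_agents n p q cs obj i k}"

definition symF :: "nat \<Rightarrow> nat \<Rightarrow> nat \<Rightarrow> constr list \<Rightarrow> lfun \<Rightarrow> (nat \<Rightarrow> real) \<Rightarrow> (nat \<Rightarrow> real)" where
  "symF n p q cs obj F = (\<lambda>k.
     (let i = k div q; a = k mod q; V = agent_class n p q cs obj i
      in (1 / real (card V)) * (\<Sum>k'\<in>V. F (k' * q + a))))"

definition symG :: "nat \<Rightarrow> nat \<Rightarrow> nat \<Rightarrow> constr list \<Rightarrow> lfun \<Rightarrow> (nat \<Rightarrow> nat \<Rightarrow> real) \<Rightarrow> (nat \<Rightarrow> nat \<Rightarrow> real)" where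
  "symG n p q cs obj G = (\<lambda>k l.
     (let i = k div p; a = k mod p; j = l div p; b = l mod p;
          Vi = agent_class n p q cs obj i; Vj = agent_class n p q cs obj j;
          ni = real (card Vi); nj = real (card Vj)
      in if i = j then (1 / ni) * (\<Sum>k'\<in>Vi. G (k' * p + a) (k' * p + b))
         else if j \<in> Vi then
           (1 / (ni * (ni - 1))) * (\<Sum>k'\<in>Vi. \<Sum>l'\<in>Vi - {k'}. G (k' * p + a) (l' * p + b))
         else (1 / (ni * nj)) * (\<Sum>k'\<in>Vi. \<Sum>l'\<in>Vj. G (k' * p + a) (l' * p + b))))"

end

theory Submission
  imports Defs "HOL-Combinatorics.Permutations"
begin

definition actF :: "nat \<Rightarrow> (nat \<Rightarrow> nat) \<Rightarrow> (nat \<Rightarrow> real) \<Rightarrow> nat \<Rightarrow> real" where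
  "actF q s F = (\<lambda>k. F (s (k div q) * q + k mod q))"

definition actG :: "nat \<Rightarrow> (nat \<Rightarrow> nat) \<Rightarrow> (nat \<Rightarrow> nat \<Rightarrow> real) \<Rightarrow> nat \<Rightarrow> nat \<Rightarrow> real" where
  "actG p s G = (\<lambda>k l. G (s (k div p) * p + k mod p) (s (l div p) * p + l mod p))"

lemma actF_comp: "actF q (t \<circ> s) F = actF q s (actF q t F)"
proof (cases "q = 0")
  case True then show ?thesis by (simp add: actF_def)
next
  case False then show ?thesis by (simp add: actF_def fun_eq_iff)
qed

lemma actG_comp: "actG p (t \<circ> s) G = actG p s (actG p t G)"
proof (cases "p = 0")
  case True then show ?thesis by (simp add: actG_def)
next
  case False then show ?thesis by (simp add: actG_def fun_eq_iff)
qed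

lemma actF_id: "actF q id F = F" by (simp add: actF_def)
lemma actG_id: "actG p id G = G" by (simp add: actG_def)

lemma swp_transpose: "swp i j = transpose i j"
  by (simp add: fun_eq_iff swp_def transpose_def)

lemma avg_fiber:
  fixes f :: "'s \<Rightarrow> 'y" and g :: "'y \<Rightarrow> real"
  assumes fin: "finite T" and ne: "T \<noteq> {}"
    and le: "\<And>y y'. y \<in> f`T \<Longrightarrow> y' \<in> f`T \<Longrightarrow> card {s\<in>T. f s = y} \<le> card {s\<in>T. f s = y'}"
  shows "(\<Sum>s\<in>T. g (f s)) / card T = (\<Sum>y\<in>f`T. g y) / card (f`T)"
proof -
  obtain y0 where y0: "y0 \<in> f`T" using ne by auto
  define c where "c = card {s\<in>T. f s = y0}"
  have cy: "card {s\<in>T. f s = y} = c" if "y \<in> f`T" for y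
    using le[OF that y0] le[OF y0 that] unfolding c_def by simp
  have "(\<Sum>s\<in>T. g (f s)) = (\<Sum>y\<in>f`T. \<Sum>s\<in>{s\<in>T. f s = y}. g (f s))"
    by (rule sum.image_gen[OF fin])
  also have "\<dots> = (\<Sum>y\<in>f`T. real c * g y)"
    by (rule sum.cong) (auto simp: cy)
  finally have 1: "(\<Sum>s\<in>T. g (f s)) = real c * (\<Sum>y\<in>f`T. g y)"
    by (simp add: sum_distrib_left)
  have "card T = (\<Sum>y\<in>f`T. card {s\<in>T. f s = y})"
    using sum.image_gen[OF fin, of "\<lambda>_. 1::nat" f] by simp
  also have "\<dots> = c * card (f`T)" by (simp add: cy)
  finally have 2: "card T = c * card (f`T)" .
  have "card T > 0" using fin ne by (simp add: card_gt_0_iff)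
  then have "c > 0" "card (f`T) > 0" using 2 by auto
  then show ?thesis using 1 2 by (simp add: field_simps)
qed

lemma lval_avg:
  assumes "finite T"
  shows "lval n p q c (\<lambda>k. (\<Sum>s\<in>T. Fs s k) / N) (\<lambda>k l. (\<Sum>s\<in>T. Gs s k l) / N)
       = (\<Sum>s\<in>T. lval n p q c (Fs s) (Gs s)) / N"
proof -
  have a: "(\<Sum>k<n*q. fst c k * ((\<Sum>s\<in>T. Fs s k) / N)) = (\<Sum>s\<in>T. \<Sum>k<n*q. fst c k * Fs s k) / N"
    by (simp add: sum_divide_distrib sum_distrib_left sum.swap[of _ T] )
  have b: "(\<Sum>k<n*p. \<Sum>l<n*p. snd c k l * ((\<Sum>s\<in>T. Gs s k l) / N))
        = (\<Sum>s\<in>T. \<Sum>k<n*p. \<Sum>l<n*p. snd c k l * Gs s k l) / N"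
  proof -
    have "(\<Sum>k<n*p. \<Sum>l<n*p. snd c k l * ((\<Sum>s\<in>T. Gs s k l) / N))
        = (\<Sum>k<n*p. \<Sum>s\<in>T. \<Sum>l<n*p. snd c k l * Gs s k l / N)"
      by (simp add: sum_divide_distrib sum_distrib_left sum.swap[of _ T])
    also have "\<dots> = (\<Sum>s\<in>T. \<Sum>k<n*p. \<Sum>l<n*p. snd c k l * Gs s k l / N)"
      by (rule sum.swap)
    finally show ?thesis by (simp add: sum_divide_distrib)
  qed
  show ?thesis unfolding lval_def a b by (simp add: sum.distrib add_divide_distrib)
qed

lemma psd_avg:
  assumes fin: "finite T" and ne: "T \<noteq> {}" and ps: "\<forall>s\<in>T. psd m (M s)"
  shows "psd m (\<lambda>r t. (\<Sum>s\<in>T. M s r t) / real (card T))"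
  unfolding psd_def
proof (intro conjI allI impI)
  fix r t assume "r < m" "t < m"
  then show "(\<Sum>s\<in>T. M s r t) / real (card T) = (\<Sum>s\<in>T. M s t r) / real (card T)"
    using ps unfolding psd_def by (metis (no_types, lifting) sum.cong)
next
  fix x :: "nat \<Rightarrow> real"
  have "(\<Sum>r<m. \<Sum>t<m. x r * ((\<Sum>s\<in>T. M s r t) / real (card T)) * x t)
      = (\<Sum>r<m. \<Sum>s\<in>T. \<Sum>t<m. x r * M s r t * x t / real (card T))"
    by (simp add: sum_divide_distrib sum_distrib_left sum_distrib_right sum.swap[of _ T] mult.assoc)
  also have "\<dots> = (\<Sum>s\<in>T. (\<Sum>r<m. \<Sum>t<m. x r * M s r t * x t) / real (card T))"
    by (subst sum.swap) (simp add: sum_divide_distrib)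
  also have "\<dots> \<ge> 0"
    using ps unfolding psd_def by (intro sum_nonneg[of T] divide_nonneg_nonneg) auto
  finally show "0 \<le> (\<Sum>r<m. \<Sum>t<m. x r * ((\<Sum>s\<in>T. M s r t) / real (card T)) * x t)" .
qed

lemma feasible_avg:
  assumes fin: "finite T" and ne: "T \<noteq> {}" and fe: "\<forall>s\<in>T. feasible n p q cs (Fs s) (Gs s)"
  shows "feasible n p q cs (\<lambda>k. (\<Sum>s\<in>T. Fs s k) / real (card T)) (\<lambda>k l. (\<Sum>s\<in>T. Gs s k l) / real (card T))"
  unfolding feasible_def
proof (intro conjI ballI)
  show "psd (n*p) (\<lambda>k l. (\<Sum>s\<in>T. Gs s k l) / real (card T))"
    using psd_avg[OF fin ne] fe unfolding feasible_def by blast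
next
  fix c assume cin: "c \<in> set cs"
  have cT: "real (card T) > 0" using fin ne by (simp add: card_gt_0_iff)
  have sat: "\<forall>s\<in>T. sat n p q c (Fs s) (Gs s)" using fe cin unfolding feasible_def by blast
  show "sat n p q c (\<lambda>k. (\<Sum>s\<in>T. Fs s k) / real (card T)) (\<lambda>k l. (\<Sum>s\<in>T. Gs s k l) / real (card T))"
  proof (cases c)
    case (LinLe a b)
    have "(\<Sum>s\<in>T. lval n p q a (Fs s) (Gs s)) \<le> (\<Sum>s\<in>T. b)"
      using sat LinLe by (intro sum_mono) auto
    then show ?thesis using LinLe cT by (simp add: lval_avg[OF fin] divide_le_eq mult.commute)
  next
    case (LinEq a b)
    have "(\<Sum>s\<in>T. lval n p q a (Fs s) (Gs s)) = (\<Sum>s\<in>T. b)"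
      using sat LinEq by (intro sum.cong) auto
    then show ?thesis using LinEq cT by (simp add: lval_avg[OF fin])
  next
    case (LMI m A C)
    have ps: "\<forall>s\<in>T. psd m (\<lambda>r t. lval n p q (A r t) (Fs s) (Gs s) + C r t)"
      using sat LMI by auto
    have eq: "(\<lambda>r t. lval n p q (A r t) (\<lambda>k. (\<Sum>s\<in>T. Fs s k) / real (card T)) (\<lambda>k l. (\<Sum>s\<in>T. Gs s k l) / real (card T)) + C r t)
       = (\<lambda>r t. (\<Sum>s\<in>T. lval n p q (A r t) (Fs s) (Gs s) + C r t) / real (card T))"
      using cT by (simp add: lval_avg[OF fin] sum.distrib add_divide_distrib)
    show ?thesis using LMI psd_avg[OF fin ne ps] by (simp only: sat.simps eq)
  qed
qed

lemma lval_cong: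
  assumes "\<forall>k<n*q. F k = F' k" "\<forall>k<n*p. \<forall>l<n*p. G k l = G' k l"
  shows "lval n p q c F G = lval n p q c F' G'"
  unfolding lval_def using assms by (intro arg_cong2[where f="(+)"] sum.cong) auto

lemma psd_cong:
  assumes "\<forall>k<N. \<forall>l<N. G k l = G' k l"
  shows "psd N G = psd N G'"
proof -
  have "(\<Sum>r<N. \<Sum>s<N. x r * G r s * x s) = (\<Sum>r<N. \<Sum>s<N. x r * G' r s * x s)" for x
    using assms by (intro sum.cong) auto
  then show ?thesis unfolding psd_def using assms by auto
qed

lemma feasible_cong:
  assumes "\<forall>k<n*q. F k = F' k" "\<forall>k<n*p. \<forall>l<n*p. G k l = G' k l"
  shows "feasible n p q cs F G = feasible n p q cs F' G'"
proof -
  have "sat n p q c F G = sat n p q c F' G'" for c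
    using lval_cong[OF assms] by (cases c) auto
  then show ?thesis unfolding feasible_def using psd_cong[of "n*p" G G'] assms by auto
qed

context
  fixes n p q :: nat and cs :: "constr list" and obj :: lfun
begin

definition good :: "(nat \<Rightarrow> nat) \<Rightarrow> bool" where
  "good s \<longleftrightarrow> (\<forall>F G. feasible n p q cs F G \<longrightarrow>
      feasible n p q cs (actF q s F) (actG p s G) \<and>
      lval n p q obj (actF q s F) (actG p s G) = lval n p q obj F G)"

lemma good_id: "good id" by (simp add: good_def actF_id actG_id)

lemma good_comp: "good t \<Longrightarrow> good s \<Longrightarrow> good (t \<circ> s)"
  unfolding good_def actF_comp actG_comp by metis

abbreviation E where "E i j \<equiv> equiv_agents n p q cs obj i j"

lemma E_iff: "E i j \<longleftrightarrow> i < n \<and> j < n \<and> good (transpose i j)"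
  by (simp add: equiv_agents_def good_def swapF_def swapG_def actF_def actG_def swp_transpose)

lemma E_refl: "i < n \<Longrightarrow> E i i"
  by (simp add: E_iff good_id)

lemma E_sym: "E i j \<Longrightarrow> E j i"
  by (simp add: E_iff transpose_commute)

lemma E_less: "E i j \<Longrightarrow> i < n" "E i j \<Longrightarrow> j < n"
  by (simp_all add: E_iff)

lemma E_trans: assumes "E i j" "E j k" shows "E i k"
proof (cases "i = k \<or> i = j \<or> j = k")
  case True then show ?thesis using assms E_refl E_less by metis
next
  case False
  have "transpose i k = transpose i j \<circ> transpose j k \<circ> transpose i j"
    using False by (simp add: transpose_comp_triple)
  moreover have "good (transpose i j)" "good (transpose j k)" using assms by (simp_all add: E_iff)
  ultimately have "good (transpose i k)" by (metis good_comp)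
  then show ?thesis using assms by (simp add: E_iff)
qed

definition Tg :: "(nat \<Rightarrow> nat) set" where
  "Tg = {s. s permutes {..<n} \<and> (\<forall>x<n. E x (s x))}"

lemma Tg_finite: "finite Tg"
  unfolding Tg_def by (rule finite_subset[OF _ finite_permutations[of "{..<n}"]]) auto

lemma id_Tg: "id \<in> Tg" by (simp add: Tg_def E_refl)

lemma Tg_comp: "s \<in> Tg \<Longrightarrow> t \<in> Tg \<Longrightarrow> t \<circ> s \<in> Tg"
  unfolding Tg_def
  by (auto intro: permutes_compose) (meson E_trans E_less)

lemma transpose_Tg: "E a b \<Longrightarrow> transpose a b \<in> Tg"
  unfolding Tg_def
  apply (auto intro!: permutes_swap_id simp: E_less)
  by (metis E_refl E_sym transpose_eq_iff)

lemma good_perm: "finite S \<Longrightarrow> S \<subseteq> {..<n} \<Longrightarrow> s permutes S \<Longrightarrow> (\<forall>x<n. E x (s x)) \<Longrightarrow> good s"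
proof (induction S arbitrary: s rule: finite_induct)
  case empty then show ?case using good_id by (simp add: id_def)
next
  case (insert x S)
  define s' where "s' = transpose x (s x) \<circ> s"
  have ps': "s' permutes S" unfolding s'_def by (rule permutes_insert_lemma[OF insert.prems(2)])
  have xn: "x < n" using insert.prems by auto
  have Exs: "E x (s x)" using insert.prems xn by auto
  have inj: "inj s" using insert.prems(2) permutes_inj by blast
  have "\<forall>y<n. E y (s' y)"
  proof (intro allI impI)
    fix y assume yn: "y < n"
    show "E y (s' y)"
    proof (cases "s y = x")
      case True
      then have "s' y = s x" by (simp add: s'_def)
      moreover have "E y x" using insert.prems yn True by metis
      ultimately show ?thesis using Exs E_trans by metis
    next
      case False
      show ?thesis
      proof (cases "s y = s x")
        case True then have "y = x" using inj by (simp add: inj_eq)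
        then show ?thesis by (simp add: s'_def xn E_refl)
      next
        case False2: False
        then have "s' y = s y" using False by (simp add: s'_def)
        then show ?thesis using insert.prems yn by metis
      qed
    qed
  qed
  then have "good s'" using insert ps' by auto
  moreover have "good (transpose x (s x))" using Exs by (simp add: E_iff)
  moreover have "s = transpose x (s x) \<circ> s'" by (simp add: s'_def fun_eq_iff)
  ultimately show ?case by (metis good_comp)
qed

lemma good_Tg: "s \<in> Tg \<Longrightarrow> good s"
  unfolding Tg_def using good_perm[of "{..<n}"] by auto


lemma Tg_E: "s \<in> Tg \<Longrightarrow> x < n \<Longrightarrow> E x (s x)"
  by (simp add: Tg_def)

lemma Tg_inj: "s \<in> Tg \<Longrightarrow> inj s"
  unfolding Tg_def using permutes_inj by blast

lemma move_pair:
  assumes "E k1 k2" "E l1 l2" "k1 \<noteq> l1" "k2 \<noteq> l2"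
  shows "\<exists>r\<in>Tg. r k1 = k2 \<and> r l1 = l2"
proof -
  define m where "m = transpose k1 k2 l1"
  have "transpose k1 k2 \<in> Tg" using assms by (simp add: transpose_Tg)
  moreover have "l1 < n" using assms(2) E_less by auto
  ultimately have "E l1 m" unfolding m_def by (rule Tg_E)
  then have "E m l2" using E_trans[OF E_sym assms(2)] by blast
  then have t2: "transpose l2 m \<in> Tg" using transpose_Tg[OF E_sym] by blast
  have mk: "m \<noteq> k2" unfolding m_def using assms(3) by (auto simp: transpose_eq_iff)
  show ?thesis
    using Tg_comp[OF \<open>transpose k1 k2 \<in> Tg\<close> t2] mk assms(4)
    by (intro bexI[of _ "transpose l2 m \<circ> transpose k1 k2"]) (auto simp: m_def)
qed

lemma fiber_le:
  assumes fin: "finite Tg" and r: "r \<in> Tg" and rf: "\<And>s. f (r \<circ> s) = f' (f s)" and y': "y' = f' y"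
  shows "card {s\<in>Tg. f s = y} \<le> card {s\<in>Tg. f s = y'}"
proof (rule card_inj_on_le[of "\<lambda>s. r \<circ> s"])
  have "inj r" using r Tg_inj by blast
  then show "inj_on ((\<circ>) r) {s \<in> Tg. f s = y}"
    by (auto simp: inj_on_def fun_eq_iff dest: injD)
  show "(\<circ>) r ` {s \<in> Tg. f s = y} \<subseteq> {s \<in> Tg. f s = y'}"
    using Tg_comp r rf y' by auto
  show "finite {s \<in> Tg. f s = y'}" using fin by simp
qed

lemma fiber_single:
  assumes "y \<in> (\<lambda>s. s i)`Tg" "y' \<in> (\<lambda>s. s i)`Tg" "i < n"
  shows "card {s\<in>Tg. s i = y} \<le> card {s\<in>Tg. s i = y'}"
proof -
  have "E i y" "E i y'" using assms Tg_E by auto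
  then have "E y y'" using E_trans[OF E_sym] by blast
  then have r: "transpose y y' \<in> Tg" by (rule transpose_Tg)
  show ?thesis
    by (rule fiber_le[OF Tg_finite r, where f="\<lambda>s. s i" and f'="transpose y y'" and y=y and y'=y']) auto
qed

lemma fiber_pair:
  assumes "y \<in> (\<lambda>s. (s i, s j))`Tg" "y' \<in> (\<lambda>s. (s i, s j))`Tg" "i < n" "j < n" "i \<noteq> j"
  shows "card {s\<in>Tg. (s i, s j) = y} \<le> card {s\<in>Tg. (s i, s j) = y'}"
proof -
  obtain s1 where s1: "s1 \<in> Tg" "y = (s1 i, s1 j)" using assms by auto
  obtain s2 where s2: "s2 \<in> Tg" "y' = (s2 i, s2 j)" using assms by auto
  have a1: "E i (s1 i)" "E i (s2 i)" "E j (s1 j)" "E j (s2 j)"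
    using s1(1) s2(1) Tg_E assms(3,4) by auto
  have "E (s1 i) (s2 i)" using E_trans[OF E_sym[OF a1(1)] a1(2)] .
  moreover have "E (s1 j) (s2 j)" using E_trans[OF E_sym[OF a1(3)] a1(4)] .
  moreover have "inj s1" "inj s2" using s1(1) s2(1) Tg_inj by auto
  then have "s1 i \<noteq> s1 j" "s2 i \<noteq> s2 j" using assms(5) by (auto dest: injD)
  ultimately obtain r where r: "r \<in> Tg" "r (s1 i) = s2 i" "r (s1 j) = s2 j"
    using move_pair by metis
  show ?thesis
    by (rule fiber_le[OF Tg_finite r(1), where f="\<lambda>s. (s i, s j)" and f'="\<lambda>(a,b). (r a, r b)" and y=y and y'=y']) (use s1 s2 r in auto)
qed

lemma image_single:
  assumes "i < n" shows "(\<lambda>s. s i)`Tg = agent_class n p q cs obj i"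
proof
  show "(\<lambda>s. s i)`Tg \<subseteq> agent_class n p q cs obj i"
  proof
    fix k assume "k \<in> (\<lambda>s. s i)`Tg"
    then obtain s where "s \<in> Tg" "k = s i" by blast
    then have "E i k" using Tg_E assms by blast
    then show "k \<in> agent_class n p q cs obj i" unfolding agent_class_def using E_less by blast
  qed
  show "agent_class n p q cs obj i \<subseteq> (\<lambda>s. s i)`Tg"
  proof
    fix k assume "k \<in> agent_class n p q cs obj i"
    then have "E i k" unfolding agent_class_def by blast
    then have "transpose i k \<in> Tg" by (rule transpose_Tg)
    moreover have "k = transpose i k i" by simp
    ultimately show "k \<in> (\<lambda>s. s i)`Tg" by blast
  qed
qed

lemma image_pair:
  assumes "i < n" "j < n" "i \<noteq> j"
  shows "(\<lambda>s. (s i, s j))`Tg = {(k,l). E i k \<and> E j l \<and> k \<noteq> l}"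
proof
  show "(\<lambda>s. (s i, s j))`Tg \<subseteq> {(k,l). E i k \<and> E j l \<and> k \<noteq> l}"
  proof
    fix y assume "y \<in> (\<lambda>s. (s i, s j))`Tg"
    then obtain s where s: "s \<in> Tg" "y = (s i, s j)" by blast
    have "E i (s i)" "E j (s j)" using Tg_E s assms by auto
    moreover have "inj s" using Tg_inj s by blast
    then have "s i \<noteq> s j" using assms(3) by (auto dest: injD)
    ultimately show "y \<in> {(k,l). E i k \<and> E j l \<and> k \<noteq> l}" using s by simp
  qed
  show "{(k,l). E i k \<and> E j l \<and> k \<noteq> l} \<subseteq> (\<lambda>s. (s i, s j))`Tg"
  proof clarify
    fix k l assume "E i k" "E j l" "k \<noteq> l"
    then obtain r where "r \<in> Tg" "r i = k" "r j = l" using move_pair[of i k j l] assms(3) by blast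
    then show "(k, l) \<in> (\<lambda>s. (s i, s j))`Tg" by force
  qed
qed

lemma Tg_ne: "Tg \<noteq> {}" using id_Tg by blast

lemma class_finite: "finite (agent_class n p q cs obj i)"
  unfolding agent_class_def by simp

lemma class_mem: "i < n \<Longrightarrow> i \<in> agent_class n p q cs obj i"
  unfolding agent_class_def by (simp add: E_refl)

lemma symF_eq:
  assumes k: "k < n*q"
  shows "symF n p q cs obj F k = (\<Sum>s\<in>Tg. actF q s F k) / real (card Tg)"
proof -
  have q: "q > 0" using k by (cases q) auto
  define i where "i = k div q"
  define a where "a = k mod q"
  have i: "i < n" unfolding i_def using k by (simp add: less_mult_imp_div_less)
  define V where "V = agent_class n p q cs obj i"
  have "(\<Sum>s\<in>Tg. actF q s F k) / real (card Tg) = (\<Sum>s\<in>Tg. (\<lambda>y. F (y*q+a)) (s i)) / real (card Tg)"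
    by (simp add: actF_def i_def a_def)
  also have "\<dots> = (\<Sum>y\<in>(\<lambda>s. s i)`Tg. F (y*q+a)) / real (card ((\<lambda>s. s i)`Tg))"
    by (rule avg_fiber[OF Tg_finite Tg_ne]) (rule fiber_single[OF _ _ i])
  also have "\<dots> = (\<Sum>y\<in>V. F (y*q+a)) / real (card V)"
    by (simp add: image_single[OF i] V_def)
  finally show ?thesis
    by (simp add: symF_def Let_def i_def[symmetric] a_def[symmetric] V_def[symmetric])
qed

lemma symG_eq:
  assumes k: "k < n*p" and l: "l < n*p"
  shows "symG n p q cs obj G k l = (\<Sum>s\<in>Tg. actG p s G k l) / real (card Tg)"
proof -
  have p: "p > 0" using k by (cases p) auto
  define i where "i = k div p"
  define a where "a = k mod p"
  define j where "j = l div p"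
  define b where "b = l mod p"
  have i: "i < n" unfolding i_def using k by (simp add: less_mult_imp_div_less)
  have j: "j < n" unfolding j_def using l by (simp add: less_mult_imp_div_less)
  define V where "V = agent_class n p q cs obj i"
  define W where "W = agent_class n p q cs obj j"
  have act: "actG p s G k l = G (s i * p + a) (s j * p + b)" for s
    by (simp add: actG_def i_def a_def j_def b_def)
  have sG: "symG n p q cs obj G k l =
     (if i = j then (1 / real (card V)) * (\<Sum>k'\<in>V. G (k' * p + a) (k' * p + b))
         else if j \<in> V then
           (1 / (real (card V) * (real (card V) - 1))) * (\<Sum>k'\<in>V. \<Sum>l'\<in>V - {k'}. G (k' * p + a) (l' * p + b))
         else (1 / (real (card V) * real (card W))) * (\<Sum>k'\<in>V. \<Sum>l'\<in>W. G (k' * p + a) (l' * p + b)))"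
    by (simp add: symG_def Let_def i_def[symmetric] a_def[symmetric] j_def[symmetric] b_def[symmetric]
        V_def[symmetric] W_def[symmetric]) (simp add: V_def W_def)
  show ?thesis
  proof (cases "i = j")
    case True
    have "(\<Sum>s\<in>Tg. actG p s G k l) / real (card Tg) = (\<Sum>s\<in>Tg. (\<lambda>y. G (y*p+a) (y*p+b)) (s i)) / real (card Tg)"
      by (simp add: act True)
    also have "\<dots> = (\<Sum>y\<in>(\<lambda>s. s i)`Tg. G (y*p+a) (y*p+b)) / real (card ((\<lambda>s. s i)`Tg))"
      by (rule avg_fiber[OF Tg_finite Tg_ne]) (rule fiber_single[OF _ _ i])
    also have "\<dots> = (\<Sum>y\<in>V. G (y*p+a) (y*p+b)) / real (card V)"
      by (simp add: image_single[OF i] V_def)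
    finally show ?thesis using True sG by simp
  next
    case False
    define Y where "Y = {(k,l). E i k \<and> E j l \<and> k \<noteq> l}"
    have "(\<Sum>s\<in>Tg. actG p s G k l) / real (card Tg)
        = (\<Sum>s\<in>Tg. (\<lambda>(x,y). G (x*p+a) (y*p+b)) (s i, s j)) / real (card Tg)"
      by (simp add: act)
    also have "\<dots> = (\<Sum>y\<in>(\<lambda>s. (s i, s j))`Tg. (\<lambda>(x,y). G (x*p+a) (y*p+b)) y) / real (card ((\<lambda>s. (s i, s j))`Tg))"
      by (rule avg_fiber[OF Tg_finite Tg_ne]) (rule fiber_pair[OF _ _ i j False])
    also have "\<dots> = (\<Sum>y\<in>Y. (\<lambda>(x,y). G (x*p+a) (y*p+b)) y) / real (card Y)"
      by (simp add: image_pair[OF i j False] Y_def)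
    finally have avg: "(\<Sum>s\<in>Tg. actG p s G k l) / real (card Tg) = (\<Sum>y\<in>Y. (\<lambda>(x,y). G (x*p+a) (y*p+b)) y) / real (card Y)" .
    have finV: "finite V" "finite W" by (simp_all add: V_def W_def class_finite)
    show ?thesis
    proof (cases "E i j")
      case True
      have jV: "j \<in> V" using True j by (simp add: V_def agent_class_def)
      have EjE: "E j l' \<longleftrightarrow> E i l'" for l' using True E_sym E_trans by blast
      have Y: "Y = Sigma V (\<lambda>k'. V - {k'})"
        unfolding Y_def V_def agent_class_def using EjE E_less by auto
      have cV: "card V \<ge> 1" using class_mem[OF i] finV unfolding V_def
        by (metis One_nat_def Suc_leI card_gt_0_iff empty_iff)
      have cY: "card Y = card V * (card V - 1)"
        unfolding Y using finV by (simp add: card_Diff_singleton)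
      have sY: "(\<Sum>y\<in>Y. (\<lambda>(x,y). G (x*p+a) (y*p+b)) y) = (\<Sum>k'\<in>V. \<Sum>l'\<in>V - {k'}. G (k' * p + a) (l' * p + b))"
        unfolding Y using finV by (simp add: sum.Sigma)
      have "real (card Y) = real (card V) * (real (card V) - 1)"
        using cV by (simp add: cY of_nat_diff)
      then show ?thesis using sG False jV avg sY by simp
    next
      case nE: False
      have jV: "j \<notin> V" using nE by (simp add: V_def agent_class_def)
      have Y: "Y = V \<times> W"
        unfolding Y_def V_def W_def agent_class_def using nE E_sym E_trans E_less by blast
      have sY: "(\<Sum>y\<in>Y. (\<lambda>(x,y). G (x*p+a) (y*p+b)) y) = (\<Sum>k'\<in>V. \<Sum>l'\<in>W. G (k' * p + a) (l' * p + b))"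
        unfolding Y by (simp add: sum.cartesian_product)
      show ?thesis using sG False jV avg sY Y by (simp add: card_cartesian_product)
    qed
  qed
qed


end

theorem proposition4:
  fixes n p q :: nat and cs :: "constr list" and obj :: lfun
    and F :: "nat \<Rightarrow> real" and G :: "nat \<Rightarrow> nat \<Rightarrow> real"
  assumes "feasible n p q cs F G"
  shows "feasible n p q cs (symF n p q cs obj F) (symG n p q cs obj G) \<and>
         lval n p q obj (symF n p q cs obj F) (symG n p q cs obj G) = lval n p q obj F G"
proof -
  let ?T = "Tg n p q cs obj"
  define FA where "FA = (\<lambda>k. (\<Sum>s\<in>?T. actF q s F k) / real (card ?T))"
  define GA where "GA = (\<lambda>k l. (\<Sum>s\<in>?T. actG p s G k l) / real (card ?T))"
  have fin: "finite ?T" by (rule Tg_finite)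
  have ne: "?T \<noteq> {}" by (rule Tg_ne)
  have gs: "feasible n p q cs (actF q s F) (actG p s G) \<and>
      lval n p q obj (actF q s F) (actG p s G) = lval n p q obj F G" if "s \<in> ?T" for s
    using good_Tg[OF that] assms unfolding good_def by blast
  have cF: "\<forall>k<n*q. symF n p q cs obj F k = FA k" by (simp add: FA_def symF_eq)
  have cG: "\<forall>k<n*p. \<forall>l<n*p. symG n p q cs obj G k l = GA k l" by (simp add: GA_def symG_eq)
  have "feasible n p q cs FA GA"
    unfolding FA_def GA_def by (rule feasible_avg[OF fin ne]) (use gs in blast)
  then have f1: "feasible n p q cs (symF n p q cs obj F) (symG n p q cs obj G)"
    using feasible_cong[OF cF cG] by simp
  have "lval n p q obj (symF n p q cs obj F) (symG n p q cs obj G) = lval n p q obj FA GA"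
    by (rule lval_cong[OF cF cG])
  also have "\<dots> = (\<Sum>s\<in>?T. lval n p q obj (actF q s F) (actG p s G)) / real (card ?T)"
    unfolding FA_def GA_def by (rule lval_avg[OF fin])
  also have "\<dots> = (\<Sum>s\<in>?T. lval n p q obj F G) / real (card ?T)"
    using gs by (intro arg_cong2[where f="(/)"] sum.cong) auto
  also have "\<dots> = lval n p q obj F G" using fin ne by (simp add: card_gt_0_iff)
  finally show ?thesis using f1 by blast
qed

end
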